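(* Let $G$ be a finite abelian group with $|G|\ge 2$. Then \[ \mathsf{BO}(|G|-1,G)=\begin{cases}|G|-1, & \text{if } \mathsf{r}_2(G)=1,\\ |G|+1, & \text{otherwise.}\end{cases} \]
   Context: Groups are written additively. For a positive integer $k$, a set $\{g_1,\dots,g_k\}$ of $k$ distinct elements of a finite abelian group $G$ is called $k$-barycentric if $\sum_{i=1}^k g_i = k\,g_j$ for some $1\le j\le k$. The $k$-th barycentric Olson constant $\mathsf{BO}(k,G)$ is the smallest integer $\ell$ such that every subset $A\subseteq G$ with $|A|\ge \ell$ contains a $k$-barycentric subset (so that always $\mathsf{BO}(k,G)\le |G|+1$, the condition being vacuous for $\ell>|G|$). Writing $G\cong \mathbb{Z}/n_1\mathbb{Z}\times\cdots\times\mathbb{Z}/n_r\mathbb{Z}$ with $1<n_1\mid\cdots\mid n_r$, the $2$-rank $\mathsf{r}_2(G)$ is the number of indices $i$ with $2\mid n_i$. *)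

theory Defs
  imports Main
begin

definition nsmul :: "nat \<Rightarrow> 'a::comm_monoid_add \<Rightarrow> 'a" where
  "nsmul k g = (\<Sum>i<k. g)"

definition barycentric :: "nat \<Rightarrow> 'a::comm_monoid_add set \<Rightarrow> bool" where
  "barycentric k B \<longleftrightarrow> finite B \<and> card B = k \<and> (\<exists>g\<in>B. (\<Sum>x\<in>B. x) = nsmul k g)"

definition BO :: "nat \<Rightarrow> 'a::{comm_monoid_add,finite} itself \<Rightarrow> nat" where
  "BO k _ = (LEAST l. \<forall>A::'a set. l \<le> card A \<longrightarrow> (\<exists>B\<subseteq>A. barycentric k B))"

text \<open>The product Z/n_1 x ... x Z/n_r, elements as lists of residues.\<close>
definition cyc_prod :: "nat list \<Rightarrow> nat list set" where
  "cyc_prod ns = {xs. length xs = length ns \<and> (\<forall>i<length ns. xs ! i < ns ! i)}"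

definition cyc_add :: "nat list \<Rightarrow> nat list \<Rightarrow> nat list \<Rightarrow> nat list" where
  "cyc_add ns xs ys = map (\<lambda>i. (xs ! i + ys ! i) mod (ns ! i)) [0..<length ns]"

definition invariant_decomp :: "'a::ab_group_add itself \<Rightarrow> nat list \<Rightarrow> bool" where
  "invariant_decomp _ ns \<longleftrightarrow>
     (\<forall>i<length ns. 1 < ns ! i) \<and>
     (\<forall>i. Suc i < length ns \<longrightarrow> ns ! i dvd ns ! Suc i) \<and>
     (\<exists>f :: 'a \<Rightarrow> nat list. bij_betw f UNIV (cyc_prod ns) \<and>
        (\<forall>a b. f (a + b) = cyc_add ns (f a) (f b)))"

definition rank2 :: "nat list \<Rightarrow> nat" where
  "rank2 ns = card {i. i < length ns \<and> even (ns ! i)}"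

end

theory Submission
  imports Defs
begin


lemma nsmul_Suc: "nsmul (Suc k) g = g + nsmul k g"
  by (simp add: nsmul_def add.commute)

lemma sum_const_nsmul: "finite A \<Longrightarrow> (\<Sum>x\<in>A. c) = nsmul (card A) (c::'a::comm_monoid_add)"
  by (induction A rule: finite_induct) (auto simp: nsmul_def add.commute)

lemma nsmul_card: "nsmul (card (UNIV::'a set)) (g::'a::{ab_group_add,finite}) = 0"
proof -
  have b: "bij_betw (\<lambda>x. x + g) UNIV (UNIV::'a set)"
    by (rule bij_betw_byWitness[where f'="\<lambda>x. x - g"]) auto
  have "(\<Sum>x\<in>UNIV. x) = (\<Sum>x\<in>UNIV. (x::'a) + g)"
    using sum.reindex_bij_betw[OF b, of "\<lambda>x. x"] by (rule sym)
  also have "\<dots> = (\<Sum>x\<in>UNIV. x) + (\<Sum>x\<in>(UNIV::'a set). g)"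
    using sum.distrib[of "\<lambda>x. x" "\<lambda>x. g" UNIV] by simp
  also have "(\<Sum>x\<in>(UNIV::'a set). g) = nsmul (card (UNIV::'a set)) g"
    by (rule sum_const_nsmul) simp
  finally show ?thesis by simp
qed
lemma nsmul_pred: "nsmul (card (UNIV::'a set) - 1) (g::'a::{ab_group_add,finite}) = - g"
proof -
  obtain m where m: "card (UNIV::'a set) = Suc m"
    using finite_UNIV_card_ge_0[where 'a='a] by (metis Suc_pred finite_UNIV)
  have "g + nsmul m g = 0" using nsmul_card[of g] unfolding m nsmul_Suc .
  then have "nsmul m g = - g" by (simp add: add_eq_0_iff)
  then show ?thesis unfolding m by simp
qed

lemma bary_iff:
  fixes B :: "'a::{ab_group_add,finite} set"
  shows "barycentric (card (UNIV::'a set) - 1) B \<longleftrightarrow>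
     (\<exists>a. B = UNIV - {a}) \<and> (\<Sum>x\<in>UNIV. x) \<noteq> (0::'a)"
proof
  assume h: "barycentric (card (UNIV::'a set) - 1) B"
  then have c: "card B = card (UNIV::'a set) - 1" by (simp add: barycentric_def)
  have "card (UNIV::'a set) > 0" by (simp add: finite_UNIV_card_ge_0)
  then have "B \<noteq> UNIV" using c by auto
  then obtain a where a: "a \<notin> B" by blast
  have "B \<subseteq> UNIV - {a}" using a by blast
  moreover have "card (UNIV - {a}) = card (UNIV::'a set) - 1" by (simp add: card_Diff_singleton)
  ultimately have Be: "B = UNIV - {a}" using c card_subset_eq[of "UNIV - {a}" B] by simp
  obtain g where g: "g \<in> B" "(\<Sum>x\<in>B. x) = nsmul (card (UNIV::'a set) - 1) g"
    using h by (auto simp: barycentric_def)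
  have "(\<Sum>x\<in>UNIV. x) = a + (\<Sum>x\<in>B. x)"
    using Be sum.remove[of UNIV a "\<lambda>x. x"] by simp
  moreover have "(\<Sum>x\<in>B. x) = - g" using g(2) unfolding nsmul_pred .
  ultimately have "(\<Sum>x\<in>UNIV. x) = a - g" by simp
  then show "(\<exists>a. B = UNIV - {a}) \<and> (\<Sum>x\<in>UNIV. x) \<noteq> (0::'a)"
    using Be g(1) by auto
next
  assume "(\<exists>a. B = UNIV - {a}) \<and> (\<Sum>x\<in>UNIV. x) \<noteq> (0::'a)"
  then obtain a where Be: "B = UNIV - {a}" and S: "(\<Sum>x\<in>UNIV. x) \<noteq> (0::'a)" by blast
  define g where "g = a - (\<Sum>x\<in>UNIV. x)"
  have "(\<Sum>x\<in>UNIV. x) = a + (\<Sum>x\<in>B. x)"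
    using Be sum.remove[of UNIV a "\<lambda>x. x"] by simp
  then have "(\<Sum>x\<in>B. x) = - g"
    unfolding g_def by (metis add_diff_cancel_left' minus_diff_eq)
  then have "(\<Sum>x\<in>B. x) = nsmul (card (UNIV::'a set) - 1) g"
    unfolding nsmul_pred .
  moreover have "g \<in> B" using S Be g_def by auto
  moreover have "card B = card (UNIV::'a set) - 1" using Be by (simp add: card_Diff_singleton)
  ultimately show "barycentric (card (UNIV::'a set) - 1) B"
    by (auto simp: barycentric_def)
qed


lemma BO_nz:
  fixes G :: "'a::{ab_group_add,finite} itself"
  assumes n2: "card (UNIV::'a set) \<ge> 2" and S: "(\<Sum>x\<in>UNIV. x) \<noteq> (0::'a)"
  shows "BO (card (UNIV::'a set) - 1) G = card (UNIV::'a set) - 1"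
  unfolding BO_def
proof (rule Least_equality)
  show "\<forall>A::'a set. card (UNIV::'a set) - 1 \<le> card A \<longrightarrow> (\<exists>B\<subseteq>A. barycentric (card (UNIV::'a set) - 1) B)"
  proof (intro allI impI)
    fix A :: "'a set"
    assume cA: "card (UNIV::'a set) - 1 \<le> card A"
    have "\<exists>a. UNIV - {a} \<subseteq> A"
    proof (cases "A = UNIV")
      case True then show ?thesis by blast
    next
      case False
      then obtain a where a: "a \<notin> A" by blast
      have sub: "A \<subseteq> UNIV - {a}" using a by blast
      have "card (UNIV - {a}) = card (UNIV::'a set) - 1" by (simp add: card_Diff_singleton)
      then have "A = UNIV - {a}" using cA card_subset_eq[OF _ sub] card_mono[OF _ sub]
        by (metis finite_Diff finite_UNIV le_antisym)
      then show ?thesis by blast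
    qed
    then obtain a where "UNIV - {a} \<subseteq> A" by blast
    moreover have "barycentric (card (UNIV::'a set) - 1) (UNIV - {a})"
      using bary_iff S by blast
    ultimately show "\<exists>B\<subseteq>A. barycentric (card (UNIV::'a set) - 1) B" by blast
  qed
next
  fix l
  assume P: "\<forall>A::'a set. l \<le> card A \<longrightarrow> (\<exists>B\<subseteq>A. barycentric (card (UNIV::'a set) - 1) B)"
  show "card (UNIV::'a set) - 1 \<le> l"
  proof (rule ccontr)
    assume "\<not> card (UNIV::'a set) - 1 \<le> l"
    then have l: "l \<le> card (UNIV::'a set) - 2" by simp
    obtain A :: "'a set" where A: "A \<subseteq> UNIV" "card A = card (UNIV::'a set) - 2"
      using obtain_subset_with_card_n[of "card (UNIV::'a set) - 2" "UNIV::'a set"] by auto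
    then obtain B where B: "B \<subseteq> A" "barycentric (card (UNIV::'a set) - 1) B" using P l by metis
    then have "card B = card (UNIV::'a set) - 1" by (simp add: barycentric_def)
    moreover have "card B \<le> card A" using B(1) by (simp add: card_mono)
    ultimately show False using A(2) n2 by simp
  qed
qed

lemma BO_z:
  fixes G :: "'a::{ab_group_add,finite} itself"
  assumes S: "(\<Sum>x\<in>UNIV. x) = (0::'a)"
  shows "BO (card (UNIV::'a set) - 1) G = card (UNIV::'a set) + 1"
  unfolding BO_def
proof (rule Least_equality)
  show "\<forall>A::'a set. card (UNIV::'a set) + 1 \<le> card A \<longrightarrow> (\<exists>B\<subseteq>A. barycentric (card (UNIV::'a set) - 1) B)"
  proof (intro allI impI)
    fix A :: "'a set"
    assume "card (UNIV::'a set) + 1 \<le> card A"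
    moreover have "card A \<le> card (UNIV::'a set)" by (simp add: card_mono)
    ultimately show "\<exists>B\<subseteq>A. barycentric (card (UNIV::'a set) - 1) B" by simp
  qed
next
  fix l
  assume P: "\<forall>A::'a set. l \<le> card A \<longrightarrow> (\<exists>B\<subseteq>A. barycentric (card (UNIV::'a set) - 1) B)"
  show "card (UNIV::'a set) + 1 \<le> l"
  proof (rule ccontr)
    assume "\<not> card (UNIV::'a set) + 1 \<le> l"
    then have "l \<le> card (UNIV::'a set)" by simp
    then obtain B :: "'a set" where "barycentric (card (UNIV::'a set) - 1) B" using P by blast
    then show False using bary_iff S by blast
  qed
qed



lemma cyc_add_nth: "i < length ns \<Longrightarrow> cyc_add ns xs ys ! i = (xs!i + ys!i) mod ns!i"
  by (simp add: cyc_add_def)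

lemma cyc_prod_Nil: "cyc_prod [] = {[]}"
  by (auto simp: cyc_prod_def)

lemma cyc_prod_Cons: "cyc_prod (n # ns) = (\<lambda>(j,xs). j # xs) ` ({..<n} \<times> cyc_prod ns)"
proof (intro set_eqI iffI)
  fix xs assume "xs \<in> cyc_prod (n # ns)"
  then show "xs \<in> (\<lambda>(j,xs). j # xs) ` ({..<n} \<times> cyc_prod ns)"
    by (cases xs) (auto simp: cyc_prod_def All_less_Suc2 image_iff)
next
  fix xs assume "xs \<in> (\<lambda>(j,xs). j # xs) ` ({..<n} \<times> cyc_prod ns)"
  then show "xs \<in> cyc_prod (n # ns)"
    by (auto simp: cyc_prod_def All_less_Suc2)
qed

lemma inj_cons: "inj_on (\<lambda>(j::nat,xs). j # xs) A"
  by (auto simp: inj_on_def)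

lemma finite_cyc: "finite (cyc_prod ns)"
  by (induction ns) (auto simp: cyc_prod_Nil cyc_prod_Cons)

lemma sum_cyc_Cons: "(\<Sum>xs\<in>cyc_prod (n#ns). g xs) = (\<Sum>j<n. \<Sum>ys\<in>cyc_prod ns. g (j#ys))"
proof -
  have "(\<Sum>xs\<in>cyc_prod (n#ns). g xs) = (\<Sum>p\<in>{..<n} \<times> cyc_prod ns. g ((\<lambda>(j,xs). j # xs) p))"
    unfolding cyc_prod_Cons sum.reindex[OF inj_cons] by (simp add: o_def)
  also have "\<dots> = (\<Sum>(j,ys)\<in>{..<n} \<times> cyc_prod ns. g (j#ys))"
    by (simp add: case_prod_beta)
  also have "\<dots> = (\<Sum>j<n. \<Sum>ys\<in>cyc_prod ns. g (j#ys))"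
    by (rule sum.cartesian_product[symmetric])
  finally show ?thesis .
qed

lemma prod_Cons_nth: "(\<Prod>j<length (n#ns). (n#ns)!j) = n * (\<Prod>j<length ns. ns!j)"
  by (simp only: length_Cons prod.lessThan_Suc_shift nth_Cons_0 nth_Cons_Suc)

lemma card_cyc: "card (cyc_prod ns) = (\<Prod>j<length ns. ns!j)"
proof (induction ns)
  case Nil then show ?case by (simp add: cyc_prod_Nil)
next
  case (Cons n ns)
  have "card (cyc_prod (n#ns)) = card ({..<n} \<times> cyc_prod ns)"
    unfolding cyc_prod_Cons by (rule card_image[OF inj_cons])
  also have "\<dots> = n * card (cyc_prod ns)" by (simp add: card_cartesian_product)
  finally show ?case using Cons by (simp only: prod_Cons_nth)
qed

lemma gauss2: "2 * (\<Sum>j<n. j) = n * (n - (1::nat))"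
proof (induction n)
  case 0 then show ?case by simp
next
  case (Suc n)
  have "2 * (\<Sum>j<Suc n. j) = n * (n - 1) + 2 * n" using Suc by simp
  also have "\<dots> = Suc n * n" by (cases n) (auto simp: algebra_simps)
  finally show ?case by simp
qed

lemma sum_coord: "i < length ns \<Longrightarrow> 2 * (\<Sum>xs\<in>cyc_prod ns. xs!i) = (\<Prod>j<length ns. ns!j) * (ns!i - 1)"
proof (induction ns arbitrary: i)
  case Nil then show ?case by simp
next
  case (Cons n ns)
  show ?case
  proof (cases i)
    case 0
    have "(\<Sum>xs\<in>cyc_prod (n#ns). xs!i) = (\<Sum>j<n. \<Sum>ys\<in>cyc_prod ns. j)"
      using 0 by (simp add: sum_cyc_Cons)
    also have "\<dots> = (\<Sum>j<n. j * card (cyc_prod ns))" by (simp add: mult.commute)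
    also have "\<dots> = (\<Sum>j<n. j) * card (cyc_prod ns)" by (rule sum_distrib_right[symmetric])
    finally have "2 * (\<Sum>xs\<in>cyc_prod (n#ns). xs!i) = n * (n - 1) * card (cyc_prod ns)"
      using gauss2[of n] by (metis mult.assoc)
    then show ?thesis unfolding prod_Cons_nth using 0 by (simp add: card_cyc algebra_simps)
  next
    case (Suc i')
    have "(\<Sum>xs\<in>cyc_prod (n#ns). xs!i) = (\<Sum>j<n. \<Sum>ys\<in>cyc_prod ns. ys!i')"
      using Suc by (simp add: sum_cyc_Cons)
    also have "\<dots> = n * (\<Sum>ys\<in>cyc_prod ns. ys!i')" by simp
    finally have "2 * (\<Sum>xs\<in>cyc_prod (n#ns). xs!i) = n * (2 * (\<Sum>ys\<in>cyc_prod ns. ys!i'))"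
      by simp
    also have "\<dots> = n * ((\<Prod>j<length ns. ns!j) * (ns!i' - 1))"
      using Cons.IH[of i'] Cons.prems Suc by simp
    finally show ?thesis unfolding prod_Cons_nth using Suc by (simp add: algebra_simps)
  qed
qed

lemma arith_key:
  fixes n Q s :: nat
  assumes "n \<ge> 1" "2 * s = n * Q * (n - 1)"
  shows "n dvd s \<longleftrightarrow> \<not> (even n \<and> odd Q)"
proof (cases "even n")
  case False
  then obtain t where t: "n - 1 = 2 * t" by (metis assms(1) dvd_def even_diff_nat odd_one le_add_diff_inverse2 odd_add)
  then have "s = n * (Q * t)" using assms(2) by simp
  then show ?thesis using False by simp
next
  case True
  then obtain m where m: "n = 2 * m" by blast
  then have s: "s = m * Q * (n - 1)" using assms(2) by simp
  show ?thesis
  proof (cases "even Q")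
    case True
    then obtain q where "Q = 2 * q" by blast
    then have "s = n * (q * (n - 1))" using s m by simp
    then show ?thesis using True by simp
  next
    case False
    have m1: "m \<ge> 1" using m assms(1) by simp
    have "odd (Q * (n - 1))" using False m m1 by simp
    then obtain r where r: "Q * (n - 1) = 2 * r + 1" by (metis oddE)
    have "s = m * (Q * (n - 1))" using s by (simp add: mult.assoc)
    also have "\<dots> = m * (2 * r + 1)" using r by simp
    finally have "s = n * r + m" using m by (simp add: algebra_simps)
    then have "s mod n = m mod n" by simp
    also have "\<dots> = m" using m m1 by simp
    finally have "\<not> n dvd s" using m1 by auto
    then show ?thesis using True False by simp
  qed
qed



lemma mod_self_double: "(c::nat) < n \<Longrightarrow> c = (c + c) mod n \<Longrightarrow> c = 0"
  by (metis add.assoc canonically_ordered_monoid_add_class.lessE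
    mod_add_left_eq mod_add_self2 mod_self)

lemma rank2_iff: "rank2 ns = 1 \<longleftrightarrow> (\<exists>i<length ns. even (ns!i) \<and> (\<forall>j<length ns. j \<noteq> i \<longrightarrow> odd (ns!j)))"
proof
  assume h: "rank2 ns = 1"
  obtain i where i: "{i. i < length ns \<and> even (ns ! i)} = {i}"
    using h card_1_singleton_iff unfolding rank2_def by (metis One_nat_def)
  then have "i < length ns \<and> even (ns!i)" by blast
  moreover have "\<forall>j<length ns. j \<noteq> i \<longrightarrow> odd (ns!j)" using i by blast
  ultimately show "\<exists>i<length ns. even (ns!i) \<and> (\<forall>j<length ns. j \<noteq> i \<longrightarrow> odd (ns!j))" by blast
next
  assume "\<exists>i<length ns. even (ns!i) \<and> (\<forall>j<length ns. j \<noteq> i \<longrightarrow> odd (ns!j))"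
  then obtain i where i: "i<length ns" "even (ns!i)" "\<forall>j<length ns. j \<noteq> i \<longrightarrow> odd (ns!j)" by blast
  then have "{i. i < length ns \<and> even (ns ! i)} = {i}" by blast
  then show "rank2 ns = 1" unfolding rank2_def by simp
qed

lemma S_iff:
  fixes f :: "'a::{ab_group_add,finite} \<Rightarrow> nat list"
  assumes pos: "\<forall>i<length ns. 1 < ns!i"
    and bij: "bij_betw f UNIV (cyc_prod ns)"
    and hom: "\<forall>a b. f (a + b) = cyc_add ns (f a) (f b)"
  shows "(\<Sum>x\<in>UNIV. x) \<noteq> (0::'a) \<longleftrightarrow> rank2 ns = 1"
proof -
  have inc: "f x \<in> cyc_prod ns" for x by (rule bij_betw_apply[OF bij]) simp
  then have len: "length (f x) = length ns" and lt: "\<And>i. i < length ns \<Longrightarrow> f x ! i < ns ! i" for x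
    by (auto simp: cyc_prod_def)
  have f0: "f 0 ! i = 0" if i: "i < length ns" for i
  proof -
    have "f 0 = cyc_add ns (f 0) (f 0)" using hom[rule_format, of 0 0] by (simp only: add_0)
    then have "f 0 ! i = cyc_add ns (f 0) (f 0) ! i" by (rule arg_cong)
    also have "\<dots> = (f 0 ! i + f 0 ! i) mod ns ! i" by (rule cyc_add_nth[OF i])
    finally show ?thesis by (rule mod_self_double[OF lt[OF i]])
  qed
  have fsum: "finite A \<Longrightarrow> f (\<Sum>x\<in>A. x) ! i = (\<Sum>x\<in>A. f x ! i) mod ns!i" if i: "i < length ns" for A :: "'a set" and i
  proof (induction A rule: finite_induct)
    case empty then show ?case using f0[OF i] by simp
  next
    case (insert x F)
    have "f (\<Sum>y\<in>insert x F. y) ! i = f (x + (\<Sum>y\<in>F. y)) ! i" using insert by simp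
    also have "\<dots> = cyc_add ns (f x) (f (\<Sum>y\<in>F. y)) ! i" using hom by simp
    also have "\<dots> = (f x ! i + f (\<Sum>y\<in>F. y) ! i) mod ns!i" by (rule cyc_add_nth[OF i])
    also have "\<dots> = (f x ! i + (\<Sum>y\<in>F. f y ! i)) mod ns!i" using insert by (simp add: mod_add_right_eq)
    also have "\<dots> = (\<Sum>y\<in>insert x F. f y ! i) mod ns!i" using insert by simp
    finally show ?case .
  qed
  define S where "S = (\<Sum>x\<in>(UNIV::'a set). x)"
  have S0: "S = 0 \<longleftrightarrow> (\<forall>i<length ns. f S ! i = 0)"
  proof
    assume "S = 0" then show "\<forall>i<length ns. f S ! i = 0" using f0 by simp
  next
    assume h: "\<forall>i<length ns. f S ! i = 0"
    have "f S = f 0" by (rule nth_equalityI) (auto simp: len h f0)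
    then show "S = 0" using bij_betw_imp_inj_on[OF bij] by (simp add: inj_on_def)
  qed
  have coord: "f S ! i = 0 \<longleftrightarrow> \<not> (even (ns!i) \<and> (\<forall>j<length ns. j \<noteq> i \<longrightarrow> odd (ns!j)))"
    if i: "i < length ns" for i
  proof -
    define Q where "Q = (\<Prod>j\<in>{..<length ns} - {i}. ns!j)"
    have P: "(\<Prod>j<length ns. ns!j) = ns!i * Q"
      unfolding Q_def using i by (simp add: prod.remove)
    have "f S ! i = (\<Sum>x\<in>UNIV. f x ! i) mod ns!i" unfolding S_def using fsum[OF i] by simp
    also have "(\<Sum>x\<in>UNIV. f x ! i) = (\<Sum>xs\<in>cyc_prod ns. xs ! i)"
      using sum.reindex_bij_betw[OF bij, of "\<lambda>xs. xs ! i"] by simp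
    finally have e: "f S ! i = (\<Sum>xs\<in>cyc_prod ns. xs ! i) mod ns!i" .
    have "2 * (\<Sum>xs\<in>cyc_prod ns. xs ! i) = ns!i * Q * (ns!i - 1)"
      using sum_coord[OF i] P by simp
    moreover have n1: "1 \<le> ns!i" using pos i less_imp_le by blast
    ultimately have k: "ns!i dvd (\<Sum>xs\<in>cyc_prod ns. xs ! i) \<longleftrightarrow> \<not> (even (ns!i) \<and> odd Q)"
      using arith_key by blast
    have q: "odd Q \<longleftrightarrow> (\<forall>j<length ns. j \<noteq> i \<longrightarrow> odd (ns!j))"
      unfolding Q_def by (auto simp: even_prod_iff)
    have "f S ! i = 0 \<longleftrightarrow> ns!i dvd (\<Sum>xs\<in>cyc_prod ns. xs ! i)" using e by (simp add: dvd_eq_mod_eq_0)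
    then show ?thesis using k q by blast
  qed
  have "S \<noteq> 0 \<longleftrightarrow> (\<exists>i<length ns. even (ns!i) \<and> (\<forall>j<length ns. j \<noteq> i \<longrightarrow> odd (ns!j)))"
    using S0 coord by auto
  then show ?thesis unfolding S_def rank2_iff .
qed


theorem mainTheorem1:
  fixes ns :: "nat list"
    and G :: "'a::{ab_group_add,finite} itself"
  assumes "card (UNIV :: 'a set) \<ge> 2"
    and "invariant_decomp G ns"
  shows "BO (card (UNIV :: 'a set) - 1) G =
           (if rank2 ns = 1 then card (UNIV :: 'a set) - 1 else card (UNIV :: 'a set) + 1)"
proof -
  obtain f :: "'a \<Rightarrow> nat list" where pos: "\<forall>i<length ns. 1 < ns!i"
    and bij: "bij_betw f UNIV (cyc_prod ns)" and hom: "\<forall>a b. f (a + b) = cyc_add ns (f a) (f b)"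
    using assms(2) unfolding invariant_decomp_def by blast
  have iff: "(\<Sum>x\<in>UNIV. x) \<noteq> (0::'a) \<longleftrightarrow> rank2 ns = 1"
    by (rule S_iff[OF pos bij hom])
  show ?thesis
  proof (cases "rank2 ns = 1")
    case True
    then show ?thesis using BO_nz[OF assms(1), of G] iff by simp
  next
    case False
    then show ?thesis using BO_z[of G] iff by simp
  qed
qed

end
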